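(* Let $a>0$, $p>1$, and let $\phi\in C^1((0,a])\cap C^0([0,a])$ satisfy $\phi(0)=0$, $\phi(t)>0$ for $t\in(0,a]$, and $c_1t^{p-1+\delta}\le\phi(t)\le c_2t^{p-1+\delta}$ for all $t\in(0,a]$, for some constants $c_1,c_2,\delta>0$. Suppose moreover that $\phi$ is twice differentiable in $(0,a)$ and $(\log\phi)''(t)=(\phi'/\phi)'(t)<0$ for all $t\in(0,a)$. Let $\eta_a(t)=\phi(t)^{-\frac1{p-1}}\big/\int_t^a\phi(\sigma)^{-\frac1{p-1}}\,d\sigma$ for $t\in(0,a)$. Then there exists a unique $T\in(0,a)$ such that $\eta_a'(t)<0$ for $t\in(0,T)$ and $\eta_a'(t)>0$ for $t\in(T,a)$. *)

theory Defs
  imports "HOL-Analysis.Analysis"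
begin

definition eta_a :: "(real \<Rightarrow> real) \<Rightarrow> real \<Rightarrow> real \<Rightarrow> real \<Rightarrow> real" where
  "eta_a \<phi> p a t =
     \<phi> t powr (-1/(p-1)) / integral {t..a} (\<lambda>\<sigma>. \<phi> \<sigma> powr (-1/(p-1)))"

end

theory Submission imports Defs begin

theorem lemma2p4:
  fixes \<phi> \<phi>' \<phi>'' :: "real \<Rightarrow> real" and a p c1 c2 \<delta> :: real
  assumes a_pos: "a > 0" and p_gt: "p > 1"
    and C1: "\<forall>t\<in>{0<..a}. (\<phi> has_real_derivative \<phi>' t) (at t within {0<..a})"
    and C1_cont: "continuous_on {0<..a} \<phi>'"
    and C0: "continuous_on {0..a} \<phi>"
    and phi0: "\<phi> 0 = 0"
    and phi_pos: "\<forall>t\<in>{0<..a}. \<phi> t > 0"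
    and consts_pos: "c1 > 0" "c2 > 0" "\<delta> > 0"
    and lower: "\<forall>t\<in>{0<..a}. c1 * t powr (p - 1 + \<delta>) \<le> \<phi> t"
    and upper: "\<forall>t\<in>{0<..a}. \<phi> t \<le> c2 * t powr (p - 1 + \<delta>)"
    and twice: "\<forall>t\<in>{0<..<a}. (\<phi>' has_real_derivative \<phi>'' t) (at t)"
    and logconc: "\<forall>t\<in>{0<..<a}. deriv (\<lambda>s. \<phi>' s / \<phi> s) t < 0"
  shows "\<exists>!T. T \<in> {0<..<a} \<and>
           (\<forall>t\<in>{0<..<T}. deriv (eta_a \<phi> p a) t < 0) \<and>
           (\<forall>t\<in>{T<..<a}. deriv (eta_a \<phi> p a) t > 0)"
proof -
  define r where "r = -1/(p-1)"
  define q where "q = 1/(p-1)"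
  define \<beta> where "\<beta> = \<delta>/(p-1)"
  define \<psi> where "\<psi> = (\<lambda>s. \<phi> s powr r)"
  define I where "I = (\<lambda>s. integral {s..a} \<psi>)"
  define h where "h = (\<lambda>s. \<phi>' s / \<phi> s)"
  define h2 where "h2 = (\<lambda>s. (\<phi>'' s * \<phi> s - \<phi>' s * \<phi>' s) / (\<phi> s * \<phi> s))"
  define g where "g = (\<lambda>s. \<psi> s - q * h s * I s)"
  define K where "K = c1 powr r"
  define C2 where "C2 = c2 powr r"
  have q_pos: "q > 0" "r = -q" "r \<le> 0" using p_gt by (auto simp: q_def r_def)
  have beta_pos: "\<beta> > 0" using p_gt consts_pos by (simp add: \<beta>_def)
  have K_pos: "K > 0" and C2_pos: "C2 > 0" using consts_pos by (auto simp: K_def C2_def)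
  have expo: "(p - 1 + \<delta>) * r = -1 - \<beta>"
    using p_gt by (simp add: r_def \<beta>_def field_simps)
  have eta: "eta_a \<phi> p a = (\<lambda>s. \<psi> s / I s)"
    by (simp add: eta_a_def \<psi>_def I_def r_def fun_eq_iff)
  have psi_pos: "\<psi> t > 0" if "t \<in> {0<..a}" for t
    using phi_pos that by (force simp: \<psi>_def)
  have dphi: "(\<phi> has_real_derivative \<phi>' t) (at t)" if t: "t \<in> {0<..<a}" for t
  proof -
    have t': "t \<in> {0<..a}" using t by simp
    have "(\<phi> has_real_derivative \<phi>' t) (at t within {0<..<a})"
      by (rule has_field_derivative_subset[OF C1[rule_format, OF t']])
        (rule greaterThanLessThan_subseteq_greaterThanAtMost_iff[THEN iffD2], simp)
    moreover have "at t within {0<..<a} = at t" by (rule at_within_open[OF t]) simp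
    ultimately show ?thesis by simp
  qed
  have dpsi: "(\<psi> has_real_derivative (-q * \<psi> t * h t)) (at t)" if t: "t \<in> {0<..<a}" for t
  proof -
    have ph: "\<phi> t > 0" using phi_pos t by auto
    have "(\<psi> has_real_derivative r * \<phi> t powr (r - of_nat 1) * \<phi>' t) (at t)"
      unfolding \<psi>_def by (rule DERIV_fun_powr[OF dphi[OF t] ph])
    moreover have "\<phi> t powr (r - of_nat 1) = \<psi> t / \<phi> t"
      using ph by (simp add: \<psi>_def powr_diff)
    ultimately show ?thesis using q_pos by (simp add: h_def)
  qed
  have cont_psi: "continuous_on {x..y} \<psi>" if "0 < x" "y \<le> a" for x y
  proof -
    have "continuous_on {x..y} \<phi>" by (rule continuous_on_subset[OF C0]) (use that in auto)
    moreover have "\<forall>s\<in>{x..y}. \<phi> s \<noteq> 0"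
    proof
      fix s assume "s \<in> {x..y}"
      then have "s \<in> {0<..a}" using that by auto
      then show "\<phi> s \<noteq> 0" using phi_pos by force
    qed
    ultimately show ?thesis unfolding \<psi>_def by (intro continuous_on_powr continuous_on_const)
  qed
  have dI: "(I has_real_derivative -\<psi> t) (at t)" if t: "t \<in> {0<..<a}" for t
  proof -
    have d: "(I has_real_derivative -\<psi> t) (at t within {t/2..a})"
      unfolding I_def using t by (intro integral_has_real_derivative' cont_psi) auto
    have i: "t \<in> interior {t/2..a}" using t by auto
    from d show ?thesis unfolding at_within_interior[OF i] .
  qed
  have psi_upper: "\<psi> s \<le> K * s powr (-1-\<beta>)" if s: "s \<in> {0<..a}" for s
  proof -
    have "\<psi> s \<le> (c1 * s powr (p - 1 + \<delta>)) powr r"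
      unfolding \<psi>_def using lower s consts_pos q_pos by (intro powr_mono2') auto
    also have "\<dots> = K * s powr (-1-\<beta>)"
      using s consts_pos by (simp add: powr_mult K_def powr_powr expo)
    finally show ?thesis .
  qed
  have psi_lower: "C2 * s powr (-1-\<beta>) \<le> \<psi> s" if s: "s \<in> {0<..a}" for s
  proof -
    have "(c2 * s powr (p - 1 + \<delta>)) powr r \<le> \<psi> s"
      unfolding \<psi>_def using upper phi_pos s consts_pos q_pos by (intro powr_mono2') auto
    moreover have "(c2 * s powr (p - 1 + \<delta>)) powr r = C2 * s powr (-1-\<beta>)"
      using s consts_pos by (simp add: powr_mult C2_def powr_powr expo)
    ultimately show ?thesis by simp
  qed
  define m where "m = C2 * a powr (-1-\<beta>)"
  have m_pos: "m > 0" using C2_pos a_pos by (simp add: m_def)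
  have psi_ge_m: "m \<le> \<psi> s" if s: "s \<in> {0<..a}" for s
  proof -
    have "a powr (-1-\<beta>) \<le> s powr (-1-\<beta>)"
      using s beta_pos by (intro powr_mono2') auto
    then have "m \<le> C2 * s powr (-1-\<beta>)" using C2_pos by (simp add: m_def)
    then show ?thesis using psi_lower[OF s] by linarith
  qed
  have intpsi: "\<psi> integrable_on {x..y}" if "0 < x" "y \<le> a" for x y
    using cont_psi[OF that] by (rule integrable_continuous_interval)
  have Ipos: "I t > 0" if t: "t \<in> {0<..<a}" for t
  proof -
    have "integral {t..a} (\<lambda>_. m) \<le> I t"
      unfolding I_def
    proof (rule integral_le)
      show "\<psi> integrable_on {t..a}" using t by (intro intpsi) auto
      show "(\<lambda>_. m) integrable_on {t..a}" by (rule integrable_const_ivl)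
      show "\<And>x. x \<in> {t..a} \<Longrightarrow> m \<le> \<psi> x" using t by (intro psi_ge_m) auto
    qed
    moreover have "integral {t..a} (\<lambda>_. m) = (a - t) * m" using t by simp
    moreover have "(a - t) * m > 0" using t m_pos by simp
    ultimately show ?thesis by linarith
  qed
  have dh: "(h has_real_derivative h2 t) (at t)" if t: "t \<in> {0<..<a}" for t
  proof -
    have "\<phi> t \<noteq> 0" using phi_pos t by force
    then show ?thesis unfolding h_def h2_def
      using DERIV_divide[OF _ dphi[OF t], of \<phi>' "\<phi>'' t"] twice t by auto
  qed
  have h2neg: "h2 t < 0" if t: "t \<in> {0<..<a}" for t
  proof -
    have "deriv h t = h2 t" by (rule DERIV_imp_deriv[OF dh[OF t]])
    moreover have "deriv h t < 0" using logconc t unfolding h_def by blast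
    ultimately show ?thesis by simp
  qed
  have deta: "deriv (eta_a \<phi> p a) t = \<psi> t * g t / (I t * I t)" if t: "t \<in> {0<..<a}" for t
  proof -
    have "I t \<noteq> 0" using Ipos[OF t] by simp
    from DERIV_divide[OF dpsi[OF t] dI[OF t] this]
    have "((\<lambda>s. \<psi> s / I s) has_real_derivative
       ((-q * \<psi> t * h t) * I t - \<psi> t * (-\<psi> t)) / (I t * I t)) (at t)" .
    moreover have "(-q * \<psi> t * h t) * I t - \<psi> t * (-\<psi> t) = \<psi> t * g t"
      by (simp add: g_def algebra_simps)
    ultimately show ?thesis unfolding eta by (simp add: DERIV_imp_deriv)
  qed
  have sign_neg: "deriv (eta_a \<phi> p a) t < 0" if t: "t \<in> {0<..<a}" and "g t < 0" for t
  proof -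
    have "\<psi> t * g t < 0" using psi_pos[of t] t that(2) by (simp add: mult_pos_neg)
    moreover have "I t * I t > 0" using Ipos[OF t] by simp
    ultimately show ?thesis using deta[OF t] by (simp add: divide_neg_pos)
  qed
  have sign_pos: "deriv (eta_a \<phi> p a) t > 0" if t: "t \<in> {0<..<a}" and "g t > 0" for t
  proof -
    have "\<psi> t * g t > 0" using psi_pos[of t] t that(2) by simp
    moreover have "I t * I t > 0" using Ipos[OF t] by simp
    ultimately show ?thesis using deta[OF t] by simp
  qed
  have dg: "(g has_real_derivative (-q * h2 t * I t)) (at t)" if t: "t \<in> {0<..<a}" for t
  proof -
    have "(g has_real_derivative (-q * \<psi> t * h t) - (q * h2 t * I t + (-\<psi> t) * (q * h t))) (at t)"
      unfolding g_def
      by (rule DERIV_diff[OF dpsi[OF t] DERIV_mult[OF DERIV_cmult[OF dh[OF t]] dI[OF t]]])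
    moreover have "(-q * \<psi> t * h t) - (q * h2 t * I t + (-\<psi> t) * (q * h t)) = -q * h2 t * I t"
      by (simp add: algebra_simps)
    ultimately show ?thesis by simp
  qed
  have dg_pos: "-q * h2 t * I t > 0" if t: "t \<in> {0<..<a}" for t
  proof -
    have "q * h2 t < 0" using q_pos(1) h2neg[OF t] by (simp add: mult_pos_neg)
    then have "q * h2 t * I t < 0" using Ipos[OF t] by (simp add: mult_neg_pos)
    then show ?thesis by simp
  qed
  have g_mono: "g x < g y" if "x \<in> {0<..<a}" "y \<in> {0<..<a}" "x < y" for x y
  proof (rule DERIV_pos_imp_increasing[OF \<open>x < y\<close>])
    fix z assume "x \<le> z" "z \<le> y"
    then have z: "z \<in> {0<..<a}" using that by auto
    show "\<exists>y. (g has_real_derivative y) (at z) \<and> y > 0"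
      using dg[OF z] dg_pos[OF z] by blast
  qed
  have g_cont: "isCont g t" if "t \<in> {0<..<a}" for t
    using dg[OF that] by (rule DERIV_isCont)
  define b where "b = a/2"
  have b: "0 < b" "b < a" using a_pos by (auto simp: b_def)
  have ex1: "\<exists>t1\<in>{0<..<a}. g t1 < 0"
  proof (rule ccontr)
    assume "\<not> ?thesis"
    then have gnn: "g s \<ge> 0" if "s \<in> {0<..<a}" for s using that by (meson not_less)
    define W where "W = I b / \<psi> b"
    have W_pos: "W > 0" using Ipos[of b] psi_pos[of b] b by (simp add: W_def)
    have wmono: "W \<le> I t / \<psi> t" if t: "0 < t" "t \<le> b" for t
      unfolding W_def
    proof (rule DERIV_nonpos_imp_nonincreasing[where f = "\<lambda>s. I s / \<psi> s", OF t(2)])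
      fix x assume x: "t \<le> x" "x \<le> b"
      then have x': "x \<in> {0<..<a}" using t b by auto
      have ps: "\<psi> x > 0" using psi_pos[of x] x' by auto
      have "((\<lambda>s. I s / \<psi> s) has_real_derivative
        ((-\<psi> x) * \<psi> x - I x * (-q * \<psi> x * h x)) / (\<psi> x * \<psi> x)) (at x)"
        using ps by (intro DERIV_divide dI[OF x'] dpsi[OF x']) auto
      moreover have "((-\<psi> x) * \<psi> x - I x * (-q * \<psi> x * h x)) = - (\<psi> x * g x)"
        by (simp add: g_def algebra_simps)
      moreover have "\<psi> x * g x \<ge> 0" using ps gnn[OF x'] by simp
      ultimately show "\<exists>y. ((\<lambda>s. I s / \<psi> s) has_real_derivative y) (at x) \<and> y \<le> 0"
        using ps gnn[OF x'] by (intro exI[of _ "- (\<psi> x * g x) / (\<psi> x * \<psi> x)"]) (auto simp: divide_nonpos_pos divide_nonneg_pos)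
    qed
    define J where "J = (\<lambda>s. I s - (K / \<beta>) * s powr (-\<beta>))"
    have Jmono: "J t \<le> J b" if t: "0 < t" "t \<le> b" for t
    proof (rule DERIV_nonneg_imp_nondecreasing[OF t(2)])
      fix x assume x: "t \<le> x" "x \<le> b"
      then have x': "x \<in> {0<..<a}" using t b by auto
      have "(J has_real_derivative (-\<psi> x) - (K/\<beta>) * (-\<beta> * x powr (-\<beta> - 1))) (at x)"
        unfolding J_def using x' by (intro DERIV_diff DERIV_cmult dI[OF x'] has_real_derivative_powr) auto
      moreover have "(-\<psi> x) - (K/\<beta>) * (-\<beta> * x powr (-\<beta> - 1)) = K * x powr (-1-\<beta>) - \<psi> x"
      proof -
        have e: "x powr (-\<beta> - 1) = x powr (-1 - \<beta>)"
          by (rule arg_cong[where f="\<lambda>e. x powr e"]) simp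
        show ?thesis using beta_pos unfolding e by (simp add: field_simps)
      qed
      moreover have "K * x powr (-1-\<beta>) - \<psi> x \<ge> 0" using psi_upper[of x] x' by auto
      ultimately show "\<exists>y. (J has_real_derivative y) (at x) \<and> y \<ge> 0" by auto
    qed
    define L where "L = I b + K / \<beta>"
    have L_pos: "L > 0"
    proof -
      have "K / \<beta> > 0" using K_pos beta_pos by simp
      then show ?thesis using Ipos[of b] b by (simp add: L_def)
    qed
    define t where "t = min (min b 1) (W * C2 / (2 * L))"
    have t: "0 < t" "t \<le> b" "t \<le> 1" "t \<le> W * C2 / (2 * L)"
      using b W_pos C2_pos L_pos by (auto simp: t_def)
    have t': "t \<in> {0<..a}" using t b by auto
    define e where "e = t powr (-1-\<beta>)"
    have e_pos: "e > 0" using t by (simp add: e_def)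
    have te: "t powr (-\<beta>) = t * e"
    proof -
      have "t * e = t powr 1 * t powr (-1-\<beta>)" using t by (simp add: e_def)
      also have "\<dots> = t powr (1 + (-1-\<beta>))" by (rule powr_add[symmetric])
      also have "\<dots> = t powr (-\<beta>)" by (rule arg_cong[where f="\<lambda>e. t powr e"]) simp
      finally show ?thesis by simp
    qed
    have te1: "1 \<le> t * e"
    proof -
      have "t powr 0 \<le> t powr (-\<beta>)" using t beta_pos by (intro powr_mono') auto
      then show ?thesis using t te by simp
    qed
    have "W * (C2 * e) \<le> W * \<psi> t"
      using psi_lower[OF t'] W_pos by (simp add: e_def)
    also have "\<dots> \<le> I t" using wmono[OF t(1,2)] psi_pos[OF t'] by (simp add: field_simps)
    also have "\<dots> \<le> I b + (K/\<beta>) * t powr (-\<beta>)"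
    proof -
      have "J t \<le> J b" by (rule Jmono[OF t(1,2)])
      moreover have "(K / \<beta>) * b powr (-\<beta>) \<ge> 0" using K_pos beta_pos by simp
      ultimately show ?thesis by (simp add: J_def)
    qed
    also have "\<dots> \<le> I b * (t * e) + (K/\<beta>) * (t * e)"
      using te te1 Ipos[of b] b by (simp add: mult_le_cancel_left1 less_imp_le)
    also have "\<dots> = (t * L) * e" by (simp add: L_def algebra_simps)
    finally have "W * C2 * e \<le> (t * L) * e" by (simp add: mult.assoc)
    then have "W * C2 \<le> t * L" using e_pos by simp
    moreover have "t * L \<le> W * C2 / 2" using t(4) L_pos by (simp add: field_simps)
    moreover have "W * C2 > 0" using W_pos C2_pos by simp
    ultimately show False by linarith
  qed
  have ex2: "\<exists>t2\<in>{0<..<a}. g t2 > 0"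
  proof -
    define H where "H = max (h b) 0"
    define M where "M = K * b powr (-1-\<beta>)"
    have H: "H \<ge> 0" "h b \<le> H" by (auto simp: H_def)
    have M_pos: "M > 0" using K_pos b by (simp add: M_def)
    have qHM: "q * H * M \<ge> 0" using q_pos(1) H M_pos by simp
    define d where "d = min (a/2) (m / (2*(q*H*M+1)))"
    have "m / (2*(q*H*M+1)) > 0" using m_pos qHM by simp
    then have d1: "0 < d" "d \<le> a/2" using a_pos unfolding d_def by linarith+
    have "d \<le> m / (2*(q*H*M+1))" by (simp add: d_def)
    then have d3: "d * (q*H*M+1) \<le> m/2" using qHM by (simp add: field_simps)
    define t where "t = a - d"
    have t: "t \<in> {0<..<a}" "b \<le> t" using d1 by (auto simp: t_def b_def)
    have ht: "h t \<le> H"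
    proof (cases "t = b")
      case True then show ?thesis using H by simp
    next
      case False
      then have "b < t" using t by simp
      then have "h t < h b"
      proof (rule DERIV_neg_imp_decreasing)
        fix x assume "b \<le> x" "x \<le> t"
        then have x: "x \<in> {0<..<a}" using t b by auto
        show "\<exists>y. (h has_real_derivative y) (at x) \<and> y < 0" using dh[OF x] h2neg[OF x] by blast
      qed
      then show ?thesis using H by simp
    qed
    have It: "I t \<le> d * M"
    proof -
      have "I t \<le> integral {t..a} (\<lambda>_. M)"
        unfolding I_def
      proof (rule integral_le)
        show "\<psi> integrable_on {t..a}" using t by (intro intpsi) auto
        show "(\<lambda>_. M) integrable_on {t..a}" by (rule integrable_const_ivl)
        fix x assume x: "x \<in> {t..a}"
        then have x': "x \<in> {0<..a}" using t by auto
        have "x powr (-1-\<beta>) \<le> b powr (-1-\<beta>)" using x t b beta_pos by (intro powr_mono2') auto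
        then have "K * x powr (-1-\<beta>) \<le> M" using K_pos by (simp add: M_def)
        then show "\<psi> x \<le> M" using psi_upper[OF x'] by linarith
      qed
      also have "\<dots> = (a - t) * M" using t by simp
      finally show ?thesis by (simp add: t_def)
    qed
    have "q * h t * I t \<le> q * H * I t"
      using ht q_pos(1) Ipos[OF t(1)] by (intro mult_right_mono mult_left_mono) auto
    also have "\<dots> \<le> q * H * (d * M)"
      using It q_pos(1) H by (intro mult_left_mono) auto
    also have "\<dots> \<le> d * (q*H*M+1)" using d1 by (simp add: algebra_simps)
    finally have "q * h t * I t \<le> m/2" using d3 by linarith
    moreover have "m \<le> \<psi> t" using psi_ge_m[of t] t by auto
    ultimately have "g t > 0" using m_pos by (simp add: g_def)
    then show ?thesis using t by blast
  qed
  obtain t1 where t1: "t1 \<in> {0<..<a}" "g t1 < 0" using ex1 by blast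
  obtain t2 where t2: "t2 \<in> {0<..<a}" "g t2 > 0" using ex2 by blast
  have t12: "t1 < t2"
  proof (rule ccontr)
    assume "\<not> t1 < t2"
    then have "t2 = t1 \<or> t2 < t1" by auto
    then have "g t2 \<le> g t1" using g_mono[OF t2(1) t1(1)] by auto
    then show False using t1 t2 by simp
  qed
  obtain T where T: "t1 \<le> T" "T \<le> t2" "g T = 0"
  proof -
    have "\<exists>x. t1 \<le> x \<and> x \<le> t2 \<and> g x = 0"
    proof (rule IVT)
      show "g t1 \<le> 0" "0 \<le> g t2" "t1 \<le> t2" using t1 t2 t12 by auto
      show "\<forall>x. t1 \<le> x \<and> x \<le> t2 \<longrightarrow> isCont g x"
        using t1 t2 by (intro allI impI g_cont) auto
    qed
    then show ?thesis using that by blast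
  qed
  have Ta: "T \<in> {0<..<a}" using T t1 t2 by auto
  have below: "\<forall>t\<in>{0<..<T}. deriv (eta_a \<phi> p a) t < 0"
  proof
    fix t assume t: "t \<in> {0<..<T}"
    then have t': "t \<in> {0<..<a}" using Ta by auto
    have "g t < g T" using g_mono[OF t' Ta] t by auto
    then show "deriv (eta_a \<phi> p a) t < 0" using sign_neg[OF t'] T by simp
  qed
  have above: "\<forall>t\<in>{T<..<a}. deriv (eta_a \<phi> p a) t > 0"
  proof
    fix t assume t: "t \<in> {T<..<a}"
    then have t': "t \<in> {0<..<a}" using Ta by auto
    have "g T < g t" using g_mono[OF Ta t'] t by auto
    then show "deriv (eta_a \<phi> p a) t > 0" using sign_pos[OF t'] T by simp
  qed
  show ?thesis
  proof (rule ex1I[of _ T])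
    show "T \<in> {0<..<a} \<and> (\<forall>t\<in>{0<..<T}. deriv (eta_a \<phi> p a) t < 0) \<and>
           (\<forall>t\<in>{T<..<a}. deriv (eta_a \<phi> p a) t > 0)" using Ta below above by blast
  next
    fix T' assume H: "T' \<in> {0<..<a} \<and> (\<forall>t\<in>{0<..<T'}. deriv (eta_a \<phi> p a) t < 0) \<and>
           (\<forall>t\<in>{T'<..<a}. deriv (eta_a \<phi> p a) t > 0)"
    show "T' = T"
    proof (rule ccontr)
      assume ne: "T' \<noteq> T"
      define u where "u = (T + T') / 2"
      show False
      proof (cases "T' < T")
        case True
        then have u1: "u \<in> {T'<..<a}" and u2: "u \<in> {0<..<T}" using H Ta by (auto simp: u_def)
        have "deriv (eta_a \<phi> p a) u > 0" using H u1 by blast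
        moreover have "deriv (eta_a \<phi> p a) u < 0" using below u2 by blast
        ultimately show False by linarith
      next
        case False
        then have "T < T'" using ne by simp
        then have u1: "u \<in> {T<..<a}" and u2: "u \<in> {0<..<T'}" using H Ta by (auto simp: u_def)
        have "deriv (eta_a \<phi> p a) u > 0" using above u1 by blast
        moreover have "deriv (eta_a \<phi> p a) u < 0" using H u2 by blast
        ultimately show False by linarith
      qed
    qed
  qed
qed
end
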